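(* Let $p$ be a $\mathrm{Beta}(\alpha,\beta)$ random variable with $\alpha\ge1$ and $\beta\ge1$, and let $b$ be distributed, conditionally on $p$, as $\mathrm{Bern}(p)$. Let $\delta=1/m$ for an integer $m\ge 2$ and define $q=\lceil p/\delta\rceil$. Then $$\mathbb{I}(p; b) \geq \mathbb{I}(q; b) \geq \mathbb{I}(p; b) - \max \left \{ 3, \log \frac{1}{\delta} \right \} \delta.$$
   Context: $\mathbb{I}(\cdot;\cdot)$ denotes mutual information (natural logarithm). *)

theory Defs
  imports "HOL-Probability.Probability"
begin

definition beta_density :: "real \<Rightarrow> real \<Rightarrow> real \<Rightarrow> real" where
  "beta_density a b x =
     (if 0 < x \<and> x < 1 then x powr (a - 1) * (1 - x) powr (b - 1) / Beta a b else 0)"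

end

theory Submission
  imports Defs
begin


lemma ln_tangent:
  fixes w r :: real assumes "0 < w" "0 < r"
  shows "w * ln r + w - r \<le> w * ln w"
proof -
  have "ln (r / w) \<le> r / w - 1" using assms by (intro ln_le_minus_one) simp
  then have "ln r - ln w \<le> r / w - 1" using assms by (simp add: ln_div)
  then have "w * (ln r - ln w) \<le> w * (r / w - 1)" using assms by (intro mult_left_mono) auto
  then show ?thesis using assms by (simp add: algebra_simps)
qed

lemma bin_lemma:
  fixes g0 w :: "'x \<Rightarrow> real" and N :: "'x measure"
  assumes i0: "integrable N g0" and i1: "integrable N (\<lambda>x. g0 x * w x)"
    and i2: "integrable N (\<lambda>x. g0 x * (w x * ln (w x / c)))"
    and nn: "\<And>x. 0 \<le> g0 x"
    and wb: "\<And>x. g0 x \<noteq> 0 \<Longrightarrow> 0 < w x \<and> w x \<le> W \<and> W - w x \<le> d"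
    and c: "0 < c" and W: "0 < W"
    and P: "P = integral\<^sup>L N g0" "0 < P"
    and S: "S = integral\<^sup>L N (\<lambda>x. g0 x * w x)" "0 < S"
  shows "S * ln (S / (P * c)) \<le> integral\<^sup>L N (\<lambda>x. g0 x * (w x * ln (w x / c)))"
    and "integral\<^sup>L N (\<lambda>x. g0 x * (w x * ln (w x / c))) \<le> S * ln (S / (P * c)) + d * P"
proof -
  define r where "r = S / P"
  have r: "0 < r" using P S by (simp add: r_def)
  have pw: "g0 x * w x * ln (r / c) + g0 x * w x - r * g0 x \<le> g0 x * (w x * ln (w x / c))" for x
  proof (cases "g0 x = 0")
    case True then show ?thesis by simp
  next
    case False
    then have w: "0 < w x" using wb by blast
    have "w x * ln r + w x - r \<le> w x * ln (w x)" by (rule ln_tangent[OF w r])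
    then have "w x * ln (r / c) + w x - r \<le> w x * ln (w x / c)"
      using w r c by (simp add: ln_div algebra_simps)
    then have "g0 x * (w x * ln (r / c) + w x - r) \<le> g0 x * (w x * ln (w x / c))"
      using nn by (intro mult_left_mono) auto
    then show ?thesis by (simp add: algebra_simps)
  qed
  have "integral\<^sup>L N (\<lambda>x. g0 x * w x * ln (r / c) + g0 x * w x - r * g0 x)
      \<le> integral\<^sup>L N (\<lambda>x. g0 x * (w x * ln (w x / c)))"
    using i0 i1 i2 pw by (intro integral_mono) auto
  also have "integral\<^sup>L N (\<lambda>x. g0 x * w x * ln (r / c) + g0 x * w x - r * g0 x)
      = S * ln (r / c) + S - r * P"
    using i0 i1 P S by simp
  also have "S * ln (r / c) + S - r * P = S * ln (S / (P * c))"
    using P S by (simp add: r_def field_simps)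
  finally show "S * ln (S / (P * c)) \<le> integral\<^sup>L N (\<lambda>x. g0 x * (w x * ln (w x / c)))" .
  have pw2: "g0 x * (w x * ln (w x / c)) \<le> g0 x * w x * ln (W / c)" for x
  proof (cases "g0 x = 0")
    case True then show ?thesis by simp
  next
    case False
    then have w: "0 < w x" "w x \<le> W" using wb by blast+
    have "ln (w x / c) \<le> ln (W / c)" using w c by (simp add: divide_right_mono)
    then have "w x * ln (w x / c) \<le> w x * ln (W / c)" using w by (intro mult_left_mono) auto
    then show ?thesis using nn[of x] by (simp add: mult_left_mono mult.assoc)
  qed
  have pw3: "g0 x * (W - w x) \<le> g0 x * d" for x
  proof (cases "g0 x = 0")
    case True then show ?thesis by simp
  next
    case False
    then show ?thesis using wb[OF False] nn[of x] by (intro mult_left_mono) auto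
  qed
  have "integral\<^sup>L N (\<lambda>x. g0 x * (w x * ln (w x / c))) \<le> integral\<^sup>L N (\<lambda>x. g0 x * w x * ln (W / c))"
    using i1 i2 pw2 by (intro integral_mono) auto
  also have "\<dots> = S * ln (W / c)" using S by simp
  also have "S * ln (W / c) \<le> S * ln (S / (P * c)) + d * P"
  proof -
    have "ln (W * P / S) \<le> W * P / S - 1" using W P S by (intro ln_le_minus_one) simp
    then have "S * ln (W * P / S) \<le> S * (W * P / S - 1)" using S by (intro mult_left_mono) auto
    also have "\<dots> = W * P - S" using S by (simp add: field_simps)
    also have "W * P - S = integral\<^sup>L N (\<lambda>x. g0 x * (W - w x))"
      using i0 i1 P S by (simp add: algebra_simps)
    also have "\<dots> \<le> integral\<^sup>L N (\<lambda>x. g0 x * d)"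
      using i0 i1 pw3 by (intro integral_mono) (auto simp: algebra_simps)
    also have "\<dots> = d * P" using P by simp
    finally have "S * ln (W * P / S) \<le> d * P" .
    moreover have "S * ln (W * P / S) = S * ln (W / c) - S * ln (S / (P * c))"
      using W P S c by (simp add: ln_div ln_mult algebra_simps)
    ultimately show ?thesis by simp
  qed
  finally show "integral\<^sup>L N (\<lambda>x. g0 x * (w x * ln (w x / c))) \<le> S * ln (S / (P * c)) + d * P" .
qed

definition binI :: "nat \<Rightarrow> int \<Rightarrow> real set" where
  "binI m k = {(real_of_int k - 1) / real m <.. real_of_int k / real m}"

lemma binI_iff: assumes "0 < m" shows "x \<in> binI m k \<longleftrightarrow> \<lceil>x * real m\<rceil> = k"
proof -
  have "x \<in> binI m k \<longleftrightarrow> real_of_int k - 1 < x * real m \<and> x * real m \<le> real_of_int k"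
    using assms by (simp add: binI_def field_simps)
  also have "\<dots> \<longleftrightarrow> \<lceil>x * real m\<rceil> = k" by (simp add: ceiling_eq_iff)
  finally show ?thesis .
qed

lemma binI_sets[measurable]: "binI m k \<in> sets borel"
  unfolding binI_def by simp

lemma sum_ind_binI:
  assumes "0 < m" "0 < x" "x < 1"
  shows "(\<Sum>k\<in>{1..int m}. indicator (binI m k) x :: real) = 1"
proof -
  have "(\<Sum>k\<in>{1..int m}. indicator (binI m k) x :: real)
      = (\<Sum>k\<in>{1..int m}. if \<lceil>x * real m\<rceil> = k then 1 else 0)"
    using assms by (intro sum.cong) (auto simp: binI_iff indicator_def)
  also have "\<dots> = 1"
  proof -
    have "0 < x * real m" using assms by simp
    then have "1 \<le> \<lceil>x * real m\<rceil>" by (metis ceiling_le_zero not_le zle_add1_eq_le add_0 ceiling_less_cancel ceiling_zero int_one_le_iff_zero_less less_ceiling_iff of_int_0)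
    moreover have "x * real m \<le> real m" using assms by simp
    then have "\<lceil>x * real m\<rceil> \<le> int m" by (simp add: ceiling_le_iff)
    ultimately show ?thesis by (simp add: sum.delta)
  qed
  finally show ?thesis .
qed

lemma decomp:
  fixes g :: "real \<Rightarrow> real"
  assumes "0 < m" "\<And>x. g x \<noteq> 0 \<Longrightarrow> 0 < x \<and> x < 1"
  shows "g x = (\<Sum>k\<in>{1..int m}. g x * indicator (binI m k) x)"
proof (cases "g x = 0")
  case True then show ?thesis by simp
next
  case False
  then have "0 < x" "x < 1" using assms by auto
  then show ?thesis using sum_ind_binI[OF assms(1)] by (simp add: sum_distrib_left[symmetric])
qed

lemma int_bdd:
  fixes g :: "real \<Rightarrow> real"
  assumes "g \<in> borel_measurable borel" "\<And>x. \<bar>g x\<bar> \<le> B" "\<And>x. g x \<noteq> 0 \<Longrightarrow> 0 < x \<and> x < 1"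
  shows "integrable lborel g"
proof (rule integrableI_bounded_set[where A="{0<..<1}" and B=B])
  show "g \<in> borel_measurable lborel" using assms by simp
  show "emeasure lborel {0<..<(1::real)} < \<infinity>" by simp
  show "AE x in lborel. x \<in> {0<..<1} \<longrightarrow> norm (g x) \<le> B" using assms by auto
  show "AE x in lborel. x \<notin> {0<..<1} \<longrightarrow> g x = 0" using assms by force
qed simp

lemma pos_int:
  fixes g :: "real \<Rightarrow> real"
  assumes "integrable lborel g" "\<And>x. 0 \<le> g x" "\<And>x. a < x \<Longrightarrow> x < b \<Longrightarrow> 0 < g x" "a < b"
  shows "0 < integral\<^sup>L lborel g"
proof -
  have "0 \<le> integral\<^sup>L lborel g" using assms by simp
  moreover have "integral\<^sup>L lborel g \<noteq> 0"
  proof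
    assume "integral\<^sup>L lborel g = 0"
    then have "AE x in lborel. g x = 0" using assms by (subst (asm) integral_nonneg_eq_0_iff_AE) auto
    then have "AE x in lborel. x \<notin> {a<..<b}" by eventually_elim (use assms in force)
    then have "{a<..<b} \<in> null_sets lborel" by (subst AE_iff_null_sets) auto
    then show False using assms by (auto simp: null_sets_def)
  qed
  ultimately show ?thesis by simp
qed

lemma xlnx_bound:
  fixes x c :: real assumes "0 < x" "x < 1" "0 < c"
  shows "\<bar>x * ln (x / c)\<bar> \<le> 1 + \<bar>ln c\<bar>"
proof -
  have a: "x * ln x \<le> 0" using assms by (intro mult_nonneg_nonpos) auto
  have "x * ln 1 + x - 1 \<le> x * ln x" by (rule ln_tangent) (use assms in auto)
  then have b: "-1 \<le> x * ln x" using assms by simp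
  have c: "\<bar>x * ln c\<bar> \<le> \<bar>ln c\<bar>" using assms by (simp add: abs_mult mult_left_le_one_le)
  have "x * ln (x / c) = x * ln x - x * ln c" using assms by (simp add: ln_div algebra_simps)
  then show ?thesis using a b c by linarith
qed

locale fdens =
  fixes f :: "real \<Rightarrow> real" and C :: real
  assumes fm[measurable]: "f \<in> borel_measurable borel"
    and fnn: "\<And>x. 0 \<le> f x" and fpos: "\<And>x. 0 < x \<Longrightarrow> x < 1 \<Longrightarrow> 0 < f x"
    and fz: "\<And>x. f x \<noteq> 0 \<Longrightarrow> 0 < x \<and> x < 1" and fb: "\<And>x. f x \<le> C"
    and f1: "integral\<^sup>L lborel f = 1"
begin

lemma C_pos: "0 < C" using fpos[of "1/2"] fb[of "1/2"] by simp

lemma int_f: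
  assumes [measurable]: "h \<in> borel_measurable borel" and hb: "\<And>x. 0 < x \<Longrightarrow> x < 1 \<Longrightarrow> \<bar>h x\<bar> \<le> B"
  shows "integrable lborel (\<lambda>x. f x * h x)"
proof (rule int_bdd[where B="C * \<bar>B\<bar>"])
  show "(\<lambda>x. f x * h x) \<in> borel_measurable borel" by measurable
  show "\<bar>f x * h x\<bar> \<le> C * \<bar>B\<bar>" for x
  proof (cases "f x = 0")
    case True then show ?thesis using C_pos by simp
  next
    case False
    then have "0 < x" "x < 1" using fz by auto
    then have "\<bar>h x\<bar> \<le> \<bar>B\<bar>" using hb by force
    then show ?thesis using fnn[of x] fb[of x] C_pos by (simp add: abs_mult mult_mono)
  qed
  show "f x * h x \<noteq> 0 \<Longrightarrow> 0 < x \<and> x < 1" for x using fz by auto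
qed

definition "mu = (\<integral>x. f x * x \<partial>lborel)"
definition "Pk m k = (\<integral>x. f x * indicator (binI m k) x \<partial>lborel)"
definition "Sk m k = (\<integral>x. f x * indicator (binI m k) x * x \<partial>lborel)"
definition "Tk m k = (\<integral>x. f x * indicator (binI m k) x * (1 - x) \<partial>lborel)"

lemma int_f_ind:
  assumes [measurable]: "h \<in> borel_measurable borel" and hb: "\<And>x. 0 < x \<Longrightarrow> x < 1 \<Longrightarrow> \<bar>h x\<bar> \<le> B"
    and [measurable]: "A \<in> sets borel"
  shows "integrable lborel (\<lambda>x. f x * indicator A x * h x)"
proof -
  have "integrable lborel (\<lambda>x. f x * (indicator A x * h x))"
    by (rule int_f[where B="\<bar>B\<bar>"]) (use hb in \<open>force simp: indicator_def\<close>)+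
  then show ?thesis by (simp add: mult.assoc)
qed

lemma int_f1: "integrable lborel f"
  using int_f[of "\<lambda>x. 1" 1] by simp

lemma fx_nn: "0 \<le> f x * x" "0 \<le> f x * (1 - x)"
  using fz[of x] fnn[of x] by (cases "f x = 0"; simp)+

lemma mu_pos: "0 < mu"
  unfolding mu_def
  by (rule pos_int[where a=0 and b=1]) (auto intro!: int_f[where B=1] mult_pos_pos fpos simp: fx_nn)

lemma one_minus_mu: "1 - mu = (\<integral>x. f x * (1 - x) \<partial>lborel)"
proof -
  have "(\<integral>x. f x * (1 - x) \<partial>lborel) = (\<integral>x. f x - f x * x \<partial>lborel)" by (simp add: algebra_simps)
  also have "\<dots> = 1 - mu" using int_f1 int_f[of "\<lambda>x. x" 1] f1 by (simp add: mu_def)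
  finally show ?thesis by simp
qed

lemma mu_lt1: "mu < 1"
proof -
  have "0 < (\<integral>x. f x * (1 - x) \<partial>lborel)"
    by (rule pos_int[where a=0 and b=1]) (auto intro!: int_f[where B=1] mult_pos_pos fpos simp: fx_nn)
  then show ?thesis using one_minus_mu by simp
qed

definition "Phi x = f x * (x * ln (x / mu)) + f x * ((1 - x) * ln ((1 - x) / (1 - mu)))"

lemma Phi_meas[measurable]: "Phi \<in> borel_measurable borel"
  unfolding Phi_def by measurable

lemma xlnx_bound': "0 < c \<Longrightarrow> 0 < x \<Longrightarrow> x < 1 \<Longrightarrow> \<bar>(1 - x) * ln ((1 - x) / c)\<bar> \<le> 1 + \<bar>ln c\<bar>" for x c :: real
  using xlnx_bound[of "1 - x" c] by simp


lemma per_bin: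
  assumes m: "0 < m" and k: "k \<in> {1..int m}"
  shows "Sk m k * ln (Sk m k / (Pk m k * mu)) + Tk m k * ln (Tk m k / (Pk m k * (1 - mu)))
           \<le> (\<integral>x. Phi x * indicator (binI m k) x \<partial>lborel)"
    and "(\<integral>x. Phi x * indicator (binI m k) x \<partial>lborel)
           \<le> Sk m k * ln (Sk m k / (Pk m k * mu)) + Tk m k * ln (Tk m k / (Pk m k * (1 - mu))) + 2 / real m * Pk m k"
proof -
  define l where "l = (real_of_int k - 1) / real m"
  define u where "u = real_of_int k / real m"
  have k1: "1 \<le> real_of_int k" "real_of_int k \<le> real m" using k by auto
  have lu: "0 \<le> l" "l < u" "u \<le> 1" "u - l = 1 / real m"
  proof -
    show "0 \<le> l" unfolding l_def using k1 by simp
    show "l < u" unfolding l_def u_def using m by (simp add: divide_strict_right_mono)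
    show "u \<le> 1" unfolding u_def using m k1 by simp
    show "u - l = 1 / real m" unfolding u_def l_def by (simp add: diff_divide_distrib[symmetric])
  qed
  have bin: "binI m k = {l<..u}" by (simp add: binI_def l_def u_def)
  have mu: "0 < mu" "0 < 1 - mu" using mu_pos mu_lt1 by auto
  define g0 where "g0 x = f x * indicator (binI m k) x" for x
  have g0m[measurable]: "g0 \<in> borel_measurable borel" unfolding g0_def by measurable
  have i0: "integrable lborel g0" unfolding g0_def using int_f_ind[of "\<lambda>x. 1" 1 "binI m k"] by simp
  have i1: "integrable lborel (\<lambda>x. g0 x * x)" unfolding g0_def using int_f_ind[of "\<lambda>x. x" 1 "binI m k"] by simp
  have i1': "integrable lborel (\<lambda>x. g0 x * (1 - x))" unfolding g0_def using int_f_ind[of "\<lambda>x. 1 - x" 1 "binI m k"] by simp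
  have i2: "integrable lborel (\<lambda>x. g0 x * (x * ln (x / mu)))"
    unfolding g0_def
  proof (rule int_f_ind[where B="1 + \<bar>ln mu\<bar>"])
    show "\<bar>x * ln (x / mu)\<bar> \<le> 1 + \<bar>ln mu\<bar>" if "0 < x" "x < 1" for x using xlnx_bound[OF that mu(1)] .
  qed simp_all
  have i2': "integrable lborel (\<lambda>x. g0 x * ((1 - x) * ln ((1 - x) / (1 - mu))))"
    unfolding g0_def
  proof (rule int_f_ind[where B="1 + \<bar>ln (1 - mu)\<bar>"])
    show "\<bar>(1 - x) * ln ((1 - x) / (1 - mu))\<bar> \<le> 1 + \<bar>ln (1 - mu)\<bar>" if "0 < x" "x < 1" for x
      using xlnx_bound'[OF mu(2) that] .
  qed simp_all
  have g0nn: "0 \<le> g0 x" for x by (simp add: g0_def fnn)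
  have g0nz: "0 < x \<and> x < 1 \<and> l < x \<and> x \<le> u" if "g0 x \<noteq> 0" for x
  proof -
    have "f x \<noteq> 0" "x \<in> binI m k" using that by (auto simp: g0_def indicator_def split: if_splits)
    then show ?thesis using fz[of x] bin by auto
  qed
  have g0pos: "0 < g0 x" if "l < x" "x < u" for x
  proof -
    have "0 < x" "x < 1" using that lu by auto
    then show ?thesis using that fpos[of x] by (simp add: g0_def bin)
  qed
  have P: "0 < Pk m k"
    unfolding Pk_def g0_def[symmetric] by (rule pos_int[OF i0 g0nn g0pos lu(2)])
  have S: "0 < Sk m k"
    unfolding Sk_def g0_def[symmetric]
  proof (rule pos_int[OF i1, of l u])
    show "0 \<le> g0 x * x" for x using g0nn[of x] g0nz[of x] by (cases "g0 x = 0") auto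
    show "0 < g0 x * x" if "l < x" "x < u" for x using that g0pos[OF that] lu by simp
  qed (use lu in simp)
  have T: "0 < Tk m k"
    unfolding Tk_def g0_def[symmetric]
  proof (rule pos_int[OF i1', of l u])
    show "0 \<le> g0 x * (1 - x)" for x using g0nn[of x] g0nz[of x] by (cases "g0 x = 0") auto
    show "0 < g0 x * (1 - x)" if "l < x" "x < u" for x using that g0pos[OF that] lu by simp
  qed (use lu in simp)
  have wb1: "0 < x \<and> x \<le> u \<and> u - x \<le> 1 / real m" if "g0 x \<noteq> 0" for x
    using g0nz[OF that] lu by auto
  have wb2: "0 < 1 - x \<and> 1 - x \<le> 1 - l \<and> (1 - l) - (1 - x) \<le> 1 / real m" if "g0 x \<noteq> 0" for x
    using g0nz[OF that] lu by auto
  have Pd: "Pk m k = integral\<^sup>L lborel g0" by (simp add: Pk_def g0_def[abs_def])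
  have Sd: "Sk m k = (\<integral>x. g0 x * x \<partial>lborel)" by (simp add: Sk_def g0_def)
  have Td: "Tk m k = (\<integral>x. g0 x * (1 - x) \<partial>lborel)" by (simp add: Tk_def g0_def)
  have u0: "0 < u" "0 < 1 - l" using lu by auto
  note A = bin_lemma[OF i0 i1 i2 g0nn wb1 mu(1) u0(1) Pd P Sd S]
  note B = bin_lemma[OF i0 i1' i2' g0nn wb2 mu(2) u0(2) Pd P Td T]
  have "(\<integral>x. Phi x * indicator (binI m k) x \<partial>lborel)
      = (\<integral>x. g0 x * (x * ln (x / mu)) + g0 x * ((1 - x) * ln ((1 - x) / (1 - mu))) \<partial>lborel)"
    by (simp add: Phi_def g0_def algebra_simps)
  also have "\<dots> = (\<integral>x. g0 x * (x * ln (x / mu)) \<partial>lborel) + (\<integral>x. g0 x * ((1 - x) * ln ((1 - x) / (1 - mu))) \<partial>lborel)"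
    using i2 i2' by simp
  finally have eq: "(\<integral>x. Phi x * indicator (binI m k) x \<partial>lborel) = \<dots>" .
  show "Sk m k * ln (Sk m k / (Pk m k * mu)) + Tk m k * ln (Tk m k / (Pk m k * (1 - mu)))
           \<le> (\<integral>x. Phi x * indicator (binI m k) x \<partial>lborel)"
    using A(1) B(1) eq by linarith
  show "(\<integral>x. Phi x * indicator (binI m k) x \<partial>lborel)
           \<le> Sk m k * ln (Sk m k / (Pk m k * mu)) + Tk m k * ln (Tk m k / (Pk m k * (1 - mu))) + 2 / real m * Pk m k"
    using A(2) B(2) eq by linarith
qed

lemma Phi_ind_int: "integrable lborel (\<lambda>x. Phi x * indicator (binI m k) x)"
proof -
  have mu: "0 < mu" "0 < 1 - mu" using mu_pos mu_lt1 by auto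
  have "integrable lborel (\<lambda>x. f x * indicator (binI m k) x * (x * ln (x / mu) + (1 - x) * ln ((1 - x) / (1 - mu))))"
  proof (rule int_f_ind[where B="(1 + \<bar>ln mu\<bar>) + (1 + \<bar>ln (1 - mu)\<bar>)"])
    show "\<bar>x * ln (x / mu) + (1 - x) * ln ((1 - x) / (1 - mu))\<bar> \<le> (1 + \<bar>ln mu\<bar>) + (1 + \<bar>ln (1 - mu)\<bar>)"
      if "0 < x" "x < 1" for x
      using xlnx_bound[OF that mu(1)] xlnx_bound'[OF mu(2) that] by linarith
  qed simp_all
  then show ?thesis by (simp add: Phi_def algebra_simps)
qed

lemma Phi_nz: "Phi x \<noteq> 0 \<Longrightarrow> 0 < x \<and> x < 1"
  using fz[of x] by (cases "f x = 0") (auto simp: Phi_def)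

lemma analytic:
  assumes m: "0 < m"
  shows "(\<Sum>k\<in>{1..int m}. Sk m k * ln (Sk m k / (Pk m k * mu)) + Tk m k * ln (Tk m k / (Pk m k * (1 - mu))))
           \<le> integral\<^sup>L lborel Phi"
    and "integral\<^sup>L lborel Phi
           \<le> (\<Sum>k\<in>{1..int m}. Sk m k * ln (Sk m k / (Pk m k * mu)) + Tk m k * ln (Tk m k / (Pk m k * (1 - mu)))) + 2 / real m"
proof -
  have "integral\<^sup>L lborel Phi = (\<integral>x. (\<Sum>k\<in>{1..int m}. Phi x * indicator (binI m k) x) \<partial>lborel)"
    by (rule Bochner_Integration.integral_cong[OF refl]) (rule decomp[OF m Phi_nz])
  also have "\<dots> = (\<Sum>k\<in>{1..int m}. (\<integral>x. Phi x * indicator (binI m k) x \<partial>lborel))"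
    by (rule Bochner_Integration.integral_sum[where f="\<lambda>k x. Phi x * indicator (binI m k) x"]) (rule Phi_ind_int)
  finally have eqPhi: "integral\<^sup>L lborel Phi = (\<Sum>k\<in>{1..int m}. (\<integral>x. Phi x * indicator (binI m k) x \<partial>lborel))" .
  have "1 = (\<integral>x. (\<Sum>k\<in>{1..int m}. f x * indicator (binI m k) x) \<partial>lborel)"
    unfolding f1[symmetric]
    by (rule Bochner_Integration.integral_cong[OF refl]) (rule decomp[OF m fz])
  also have "\<dots> = (\<Sum>k\<in>{1..int m}. Pk m k)"
    unfolding Pk_def
    by (rule Bochner_Integration.integral_sum[where f="\<lambda>k x. f x * indicator (binI m k) x"]) (use int_f_ind[of "\<lambda>x. 1" 1] in simp)
  finally have sumP: "(\<Sum>k\<in>{1..int m}. Pk m k) = 1" by simp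
  show "(\<Sum>k\<in>{1..int m}. Sk m k * ln (Sk m k / (Pk m k * mu)) + Tk m k * ln (Tk m k / (Pk m k * (1 - mu))))
           \<le> integral\<^sup>L lborel Phi"
    unfolding eqPhi by (rule sum_mono) (rule per_bin(1)[OF m])
  have "integral\<^sup>L lborel Phi \<le> (\<Sum>k\<in>{1..int m}. Sk m k * ln (Sk m k / (Pk m k * mu)) + Tk m k * ln (Tk m k / (Pk m k * (1 - mu))) + 2 / real m * Pk m k)"
    unfolding eqPhi by (rule sum_mono) (rule per_bin(2)[OF m])
  also have "\<dots> = (\<Sum>k\<in>{1..int m}. Sk m k * ln (Sk m k / (Pk m k * mu)) + Tk m k * ln (Tk m k / (Pk m k * (1 - mu)))) + 2 / real m * (\<Sum>k\<in>{1..int m}. Pk m k)"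
    by (simp add: sum.distrib sum_distrib_left)
  finally show "integral\<^sup>L lborel Phi
           \<le> (\<Sum>k\<in>{1..int m}. Sk m k * ln (Sk m k / (Pk m k * mu)) + Tk m k * ln (Tk m k / (Pk m k * (1 - mu)))) + 2 / real m"
    using sumP by simp
qed

end



lemma distributed_countable:
  fixes X :: "'a \<Rightarrow> 'b::countable"
  assumes "prob_space M" and Xm: "X \<in> measurable M (count_space UNIV)"
    and PX: "\<And>a. measure M {\<omega>\<in>space M. X \<omega> = a} = P a" and nn: "\<And>a. 0 \<le> P a"
  shows "distributed M (count_space UNIV) X (\<lambda>a. ennreal (P a))"
  unfolding distributed_def
proof (intro conjI)
  interpret prob_space M by fact
  show "distr M (count_space UNIV) X = density (count_space UNIV) (\<lambda>a. ennreal (P a))"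
  proof (rule measure_eqI_countable[where A=UNIV])
    fix a :: 'b
    have "emeasure (distr M (count_space UNIV) X) {a} = emeasure M (X -` {a} \<inter> space M)"
      using Xm by (simp add: emeasure_distr)
    also have "X -` {a} \<inter> space M = {\<omega>\<in>space M. X \<omega> = a}" by auto
    also have "emeasure M {\<omega>\<in>space M. X \<omega> = a} = ennreal (P a)"
      using PX[of a] by (simp add: emeasure_eq_measure)
    also have "ennreal (P a) = emeasure (density (count_space UNIV) (\<lambda>a. ennreal (P a))) {a}"
      by (simp add: emeasure_density nn_integral_indicator_singleton)
    finally show "emeasure (distr M (count_space UNIV) X) {a} = emeasure (density (count_space UNIV) (\<lambda>a. ennreal (P a))) {a}" .
  qed auto
qed (use Xm in auto)

context fdens
begin

lemma joint_distr:
  fixes M :: "'a measure" and p :: "'a \<Rightarrow> real" and b :: "'a \<Rightarrow> bool"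
  assumes PM: "prob_space M" and pm[measurable]: "p \<in> measurable M borel"
    and bm[measurable]: "b \<in> measurable M (count_space UNIV)"
    and ET: "\<And>A. A \<in> sets borel \<Longrightarrow> measure M {\<omega>\<in>space M. p \<omega> \<in> A \<and> b \<omega>} = (\<integral>x. f x * indicator A x * x \<partial>lborel)"
    and EF: "\<And>A. A \<in> sets borel \<Longrightarrow> measure M {\<omega>\<in>space M. p \<omega> \<in> A \<and> \<not> b \<omega>} = (\<integral>x. f x * indicator A x * (1 - x) \<partial>lborel)"
  shows "distributed M (lborel \<Otimes>\<^sub>M count_space UNIV) (\<lambda>\<omega>. (p \<omega>, b \<omega>))
           (\<lambda>z. ennreal (f (fst z) * (if snd z then fst z else 1 - fst z)))"
  unfolding distributed_def
proof (intro conjI)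
  interpret prob_space M by fact
  define G where "G z = f (fst z) * (if snd z then fst z else 1 - fst z)" for z :: "real \<times> bool"
  have Gm[measurable]: "G \<in> borel_measurable (lborel \<Otimes>\<^sub>M count_space UNIV)"
  proof -
    have "G = (\<lambda>z. if snd z then f (fst z) * fst z else f (fst z) * (1 - fst z))"
      by (auto simp: G_def fun_eq_iff)
    also have "\<dots> \<in> borel_measurable (lborel \<Otimes>\<^sub>M count_space UNIV)"
      by measurable
    finally show ?thesis .
  qed
  have Xm: "(\<lambda>\<omega>. (p \<omega>, b \<omega>)) \<in> measurable M (lborel \<Otimes>\<^sub>M count_space UNIV)"
    by measurable
  then show "(\<lambda>\<omega>. (p \<omega>, b \<omega>)) \<in> measurable M (lborel \<Otimes>\<^sub>M count_space UNIV)" .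
  show "(\<lambda>z. ennreal (f (fst z) * (if snd z then fst z else 1 - fst z))) \<in> borel_measurable (lborel \<Otimes>\<^sub>M count_space UNIV)"
    using Gm unfolding G_def by measurable
  have GG: "(\<lambda>z. ennreal (f (fst z) * (if snd z then fst z else 1 - fst z))) = (\<lambda>z. ennreal (G z))"
    by (simp add: G_def)
  show "distr M (lborel \<Otimes>\<^sub>M count_space UNIV) (\<lambda>\<omega>. (p \<omega>, b \<omega>)) =
    density (lborel \<Otimes>\<^sub>M count_space UNIV) (\<lambda>z. ennreal (f (fst z) * (if snd z then fst z else 1 - fst z)))"
    unfolding GG
  proof (rule measure_eqI)
    show "sets (distr M (lborel \<Otimes>\<^sub>M count_space UNIV) (\<lambda>\<omega>. (p \<omega>, b \<omega>))) = sets (density (lborel \<Otimes>\<^sub>M count_space UNIV) (\<lambda>z. ennreal (G z)))"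
      by simp
    fix C assume "C \<in> sets (distr M (lborel \<Otimes>\<^sub>M count_space UNIV) (\<lambda>\<omega>. (p \<omega>, b \<omega>)))"
    then have C[measurable]: "C \<in> sets (lborel \<Otimes>\<^sub>M count_space UNIV)" by simp
    define CT where "CT = (\<lambda>x. (x, True)) -` C"
    define CF where "CF = (\<lambda>x. (x, False)) -` C"
    have CT[measurable]: "CT \<in> sets borel" unfolding CT_def using sets_Pair2[OF C] by simp
    have CF[measurable]: "CF \<in> sets borel" unfolding CF_def using sets_Pair2[OF C] by simp
    have sT[measurable]: "{\<omega>\<in>space M. p \<omega> \<in> CT \<and> b \<omega>} \<in> sets M" by measurable
    have sF[measurable]: "{\<omega>\<in>space M. p \<omega> \<in> CF \<and> \<not> b \<omega>} \<in> sets M" by measurable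
    have "emeasure (distr M (lborel \<Otimes>\<^sub>M count_space UNIV) (\<lambda>\<omega>. (p \<omega>, b \<omega>))) C
        = emeasure M ((\<lambda>\<omega>. (p \<omega>, b \<omega>)) -` C \<inter> space M)"
      using Xm C by (simp add: emeasure_distr)
    also have "(\<lambda>\<omega>. (p \<omega>, b \<omega>)) -` C \<inter> space M
        = {\<omega>\<in>space M. p \<omega> \<in> CT \<and> b \<omega>} \<union> {\<omega>\<in>space M. p \<omega> \<in> CF \<and> \<not> b \<omega>}"
      unfolding CT_def CF_def by (auto; metis (full_types))
    also have "emeasure M \<dots> = emeasure M {\<omega>\<in>space M. p \<omega> \<in> CT \<and> b \<omega>} + emeasure M {\<omega>\<in>space M. p \<omega> \<in> CF \<and> \<not> b \<omega>}"
      by (rule plus_emeasure[symmetric]) auto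
    also have "\<dots> = ennreal (\<integral>x. f x * indicator CT x * x \<partial>lborel) + ennreal (\<integral>x. f x * indicator CF x * (1 - x) \<partial>lborel)"
      using ET[OF CT] EF[OF CF] by (simp add: emeasure_eq_measure)
    also have "\<dots> = (\<integral>\<^sup>+x. ennreal (f x * indicator CT x * x) \<partial>lborel) + (\<integral>\<^sup>+x. ennreal (f x * indicator CF x * (1 - x)) \<partial>lborel)"
    proof -
      have 1: "integrable lborel (\<lambda>x. f x * indicator CT x * x)"
        by (rule int_f_ind[where B=1]) auto
      have 2: "integrable lborel (\<lambda>x. f x * indicator CF x * (1 - x))"
        by (rule int_f_ind[where B=1]) auto
      have 3: "0 \<le> f x * indicator A x * x" "0 \<le> f x * indicator A x * (1 - x)" for x A
        using fx_nn[of x] by (auto simp: indicator_def)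
      show ?thesis using 1 2 3 by (simp add: nn_integral_eq_integral)
    qed
    also have "\<dots> = (\<integral>\<^sup>+x. ennreal (f x * indicator CT x * x) + ennreal (f x * indicator CF x * (1 - x)) \<partial>lborel)"
      by (rule nn_integral_add[symmetric]) auto
    also have "\<dots> = (\<integral>\<^sup>+x. (\<integral>\<^sup>+t. ennreal (G (x, t)) * indicator C (x, t) \<partial>count_space UNIV) \<partial>lborel)"
    proof (rule nn_integral_cong)
      fix x :: real
      have "(\<integral>\<^sup>+t. ennreal (G (x, t)) * indicator C (x, t) \<partial>count_space UNIV)
          = (\<Sum>t\<in>UNIV. ennreal (G (x, t)) * indicator C (x, t))"
        by (rule nn_integral_count_space_finite) simp
      also have "\<dots> = ennreal (G (x, True)) * indicator C (x, True) + ennreal (G (x, False)) * indicator C (x, False)"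
        unfolding UNIV_bool by (simp only: sum.insert finite.emptyI finite_insert insert_iff empty_iff sum.empty simp_thms) (simp add: add.commute)
      also have "\<dots> = ennreal (f x * indicator CT x * x) + ennreal (f x * indicator CF x * (1 - x))"
        by (simp add: G_def CT_def CF_def indicator_def)
      finally show "ennreal (f x * indicator CT x * x) + ennreal (f x * indicator CF x * (1 - x))
          = (\<integral>\<^sup>+t. ennreal (G (x, t)) * indicator C (x, t) \<partial>count_space UNIV)" by simp
    qed
    also have "\<dots> = (\<integral>\<^sup>+z. ennreal (G z) * indicator C z \<partial>(lborel \<Otimes>\<^sub>M count_space UNIV))"
      by (rule sigma_finite_measure.nn_integral_fst) (auto intro: sigma_finite_measure_count_space)
    also have "\<dots> = emeasure (density (lborel \<Otimes>\<^sub>M count_space UNIV) (\<lambda>z. ennreal (G z))) C"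
      by (rule emeasure_density[symmetric]) auto
    finally show "emeasure (distr M (lborel \<Otimes>\<^sub>M count_space UNIV) (\<lambda>\<omega>. (p \<omega>, b \<omega>))) C
        = emeasure (density (lborel \<Otimes>\<^sub>M count_space UNIV) (\<lambda>z. ennreal (G z))) C" .
  qed
qed

end

context fdens
begin

lemma outside_zero:
  assumes "0 < m" "k \<notin> {1..int m}"
  shows "f x * indicator (binI m k) x = 0"
proof (cases "f x = 0")
  case False
  then have x: "0 < x" "x < 1" using fz by auto
  have "x \<notin> binI m k"
  proof
    assume "x \<in> binI m k"
    then have k: "\<lceil>x * real m\<rceil> = k" using binI_iff[OF assms(1)] by simp
    have "0 < x * real m" using x assms by simp
    then have "1 \<le> k" using k by linarith
    moreover have "x * real m \<le> real m" using x assms by simp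
    then have "k \<le> int m" using k by (simp add: ceiling_le_iff flip: k)
    ultimately show False using assms by simp
  qed
  then show ?thesis by simp
qed simp

lemma Sk_Tk_out:
  assumes "0 < m" "k \<notin> {1..int m}"
  shows "Sk m k = 0" "Tk m k = 0"
proof -
  have z: "f x * indicator (binI m k) x = 0" for x by (rule outside_zero[OF assms])
  show "Sk m k = 0" unfolding Sk_def z by simp
  show "Tk m k = 0" unfolding Tk_def z by simp
qed

definition "H z = (if snd z then f (fst z) * (fst z * ln (fst z / mu)) else f (fst z) * ((1 - fst z) * ln ((1 - fst z) / (1 - mu))))"

lemma H_meas[measurable]: "H \<in> borel_measurable (lborel \<Otimes>\<^sub>M count_space UNIV)"
  unfolding H_def by measurable

lemma H_int: "integrable (lborel \<Otimes>\<^sub>M count_space UNIV) H"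
proof -
  interpret PS: pair_sigma_finite lborel "count_space (UNIV :: bool set)"
    by (intro pair_sigma_finite.intro lborel.sigma_finite_measure_axioms sigma_finite_measure_count_space)
  have mu: "0 < mu" "0 < 1 - mu" using mu_pos mu_lt1 by auto
  define B where "B = C * ((1 + \<bar>ln mu\<bar>) + (1 + \<bar>ln (1 - mu)\<bar>))"
  show ?thesis
  proof (rule integrableI_bounded_set[where A="{0<..<1} \<times> UNIV" and B=B])
    show "{0<..<1::real} \<times> (UNIV :: bool set) \<in> sets (lborel \<Otimes>\<^sub>M count_space UNIV)" by simp
    show "H \<in> borel_measurable (lborel \<Otimes>\<^sub>M count_space UNIV)" by simp
    have "emeasure (lborel \<Otimes>\<^sub>M count_space UNIV) ({0<..<1::real} \<times> (UNIV :: bool set))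
        = emeasure lborel {0<..<1::real} * emeasure (count_space UNIV) (UNIV :: bool set)"
      by (rule sigma_finite_measure.emeasure_pair_measure_Times[OF sigma_finite_measure_count_space]) auto
    also have "\<dots> < \<infinity>" by (simp add: ennreal_mult_less_top)
    finally show "emeasure (lborel \<Otimes>\<^sub>M count_space UNIV) ({0<..<1::real} \<times> (UNIV :: bool set)) < \<infinity>" .
    have bnd: "\<bar>H z\<bar> \<le> B" if zA: "z \<in> {0<..<1} \<times> UNIV" for z
    proof -
      obtain x t where z: "z = (x, t)" "0 < x" "x < 1" using zA by (cases z) auto
      have b1: "\<bar>x * ln (x / mu)\<bar> \<le> (1 + \<bar>ln mu\<bar>) + (1 + \<bar>ln (1 - mu)\<bar>)"
        using xlnx_bound[OF z(2,3) mu(1)] by simp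
      have b2: "\<bar>(1 - x) * ln ((1 - x) / (1 - mu))\<bar> \<le> (1 + \<bar>ln mu\<bar>) + (1 + \<bar>ln (1 - mu)\<bar>)"
        using xlnx_bound'[OF mu(2) z(2,3)] by simp
      have fx: "0 \<le> f x" "f x \<le> C" using fnn fb by auto
      show ?thesis using z b1 b2 fx unfolding H_def B_def
        by (auto simp: abs_mult intro!: mult_mono)
    qed
    then show "AE z in lborel \<Otimes>\<^sub>M count_space UNIV. z \<in> {0<..<1} \<times> UNIV \<longrightarrow> norm (H z) \<le> B"
      by auto
    have "H z = 0" if "z \<notin> {0<..<1} \<times> UNIV" for z
    proof -
      have "f (fst z) = 0" using that fz[of "fst z"] by (cases z) auto
      then show ?thesis by (simp add: H_def)
    qed
    then show "AE z in lborel \<Otimes>\<^sub>M count_space UNIV. z \<notin> {0<..<1} \<times> UNIV \<longrightarrow> H z = 0"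
      by auto
  qed
qed

lemma H_integral: "integral\<^sup>L (lborel \<Otimes>\<^sub>M count_space UNIV) H = integral\<^sup>L lborel Phi"
proof -
  interpret PS: pair_sigma_finite lborel "count_space (UNIV :: bool set)"
    by (intro pair_sigma_finite.intro lborel.sigma_finite_measure_axioms sigma_finite_measure_count_space)
  have "integral\<^sup>L (lborel \<Otimes>\<^sub>M count_space UNIV) H = (\<integral>x. (\<integral>t. H (x, t) \<partial>count_space UNIV) \<partial>lborel)"
    by (rule PS.integral_fst'[symmetric]) (rule H_int)
  also have "\<dots> = integral\<^sup>L lborel Phi"
  proof (rule Bochner_Integration.integral_cong[OF refl])
    fix x :: real
    have "(\<integral>t. H (x, t) \<partial>count_space UNIV) = (\<Sum>t\<in>UNIV. H (x, t))"
      by (rule lebesgue_integral_count_space_finite) simp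
    also have "\<dots> = H (x, True) + H (x, False)"
      unfolding UNIV_bool by (simp only: sum.insert finite.emptyI finite_insert insert_iff empty_iff sum.empty simp_thms)
    also have "\<dots> = Phi x" by (simp add: H_def Phi_def)
    finally show "(\<integral>t. H (x, t) \<partial>count_space UNIV) = Phi x" .
  qed
  finally show ?thesis .
qed

end

lemma log_e: "log (exp 1) y = ln y" by (simp add: log_def)

theorem lemma7:
  fixes M :: "'a measure" and p :: "'a \<Rightarrow> real" and b :: "'a \<Rightarrow> bool"
    and \<alpha> \<beta> :: real and m :: nat
  assumes "prob_space M"
    and "\<alpha> \<ge> 1" and "\<beta> \<ge> 1"
    and p_beta: "distributed M lborel p (beta_density \<alpha> \<beta>)"
    and b_meas: "b \<in> measurable M (count_space UNIV)"
    and b_bern: "\<And>A. A \<in> sets borel \<Longrightarrow>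
        measure M {\<omega> \<in> space M. p \<omega> \<in> A \<and> b \<omega>}
          = prob_space.expectation M (\<lambda>\<omega>. indicator A (p \<omega>) * p \<omega>)"
    and "m \<ge> 2"
  shows "let \<delta> = 1 / real m;
             q = (\<lambda>\<omega>. \<lceil>p \<omega> / \<delta>\<rceil>);
             Ipb = prob_space.mutual_information M (exp 1) borel (count_space UNIV) p b;
             Iqb = prob_space.mutual_information M (exp 1) (count_space UNIV) (count_space UNIV) q b
         in Ipb \<ge> Iqb \<and> Iqb \<ge> Ipb - max 3 (ln (1 / \<delta>)) * \<delta>"
proof -
  interpret P: prob_space M by fact
  interpret I: information_space M "exp 1" by unfold_locales simp
  have m0: "0 < m" using assms by simp
  define f where "f = beta_density \<alpha> \<beta>"
  have Bpos: "0 < Beta \<alpha> \<beta>" using assms by (simp add: Beta_def Gamma_real_pos)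
  have pf: "distributed M lborel p (\<lambda>x. ennreal (f x))" using p_beta by (simp add: f_def)
  have pm[measurable]: "p \<in> measurable M borel"
    using distributed_measurable[OF pf] by simp
  note b_meas[measurable]
  have fnn: "0 \<le> f x" for x
    using Bpos by (simp add: f_def beta_density_def)
  have f1: "integral\<^sup>L lborel f = 1"
  proof -
    have "(\<integral>x. f x * 1 \<partial>lborel) = (\<integral>x. 1 \<partial>M)"
      by (rule distributed_integral[OF pf]) (auto simp: fnn)
    then show ?thesis by (simp add: P.prob_space)
  qed
  have fd: "fdens f (1 / Beta \<alpha> \<beta>)"
  proof
    show "f \<in> borel_measurable borel" unfolding f_def beta_density_def by measurable
    show "0 \<le> f x" for x by (rule fnn)
    show "0 < f x" if "0 < x" "x < 1" for x
      using that Bpos by (simp add: f_def beta_density_def)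
    show "f x \<noteq> 0 \<Longrightarrow> 0 < x \<and> x < 1" for x
      by (simp add: f_def beta_density_def split: if_splits)
    show "f x \<le> 1 / Beta \<alpha> \<beta>" for x
    proof (cases "0 < x \<and> x < 1")
      case True
      have "x powr (\<alpha> - 1) \<le> 1" using True assms by (intro powr_le1) auto
      moreover have "(1 - x) powr (\<beta> - 1) \<le> 1" using True assms by (intro powr_le1) auto
      ultimately have "x powr (\<alpha> - 1) * (1 - x) powr (\<beta> - 1) \<le> 1"
        by (simp add: mult_le_one)
      then show ?thesis using True Bpos by (simp add: f_def beta_density_def divide_right_mono)
    next
      case False
      then have "f x = 0" by (auto simp: f_def beta_density_def)
      then show ?thesis using Bpos by simp
    qed
    show "integral\<^sup>L lborel f = 1" by (rule f1)
  qed
  interpret F: fdens f "1 / Beta \<alpha> \<beta>" by (rule fd)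

  have E1: "measure M {\<omega>\<in>space M. p \<omega> \<in> A} = (\<integral>x. f x * indicator A x \<partial>lborel)"
    if A[measurable]: "A \<in> sets borel" for A
  proof -
    have "(\<integral>x. f x * indicator A x \<partial>lborel) = (\<integral>\<omega>. indicator A (p \<omega>) \<partial>M)"
      by (rule distributed_integral[OF pf]) (auto simp: fnn)
    also have "\<dots> = (\<integral>\<omega>. indicator {\<omega>\<in>space M. p \<omega> \<in> A} \<omega> \<partial>M)"
      by (rule Bochner_Integration.integral_cong) (auto simp: indicator_def)
    also have "\<dots> = measure M {\<omega>\<in>space M. p \<omega> \<in> A}"
      by (simp add: Int_absorb2)
    finally show ?thesis by simp
  qed
  have E2: "measure M {\<omega>\<in>space M. p \<omega> \<in> A \<and> b \<omega>} = (\<integral>x. f x * indicator A x * x \<partial>lborel)"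
    if A[measurable]: "A \<in> sets borel" for A
  proof -
    have "(\<integral>x. f x * (indicator A x * x) \<partial>lborel) = (\<integral>\<omega>. indicator A (p \<omega>) * p \<omega> \<partial>M)"
      by (rule distributed_integral[OF pf]) (auto simp: fnn)
    then show ?thesis using b_bern[OF A] by (simp add: mult.assoc)
  qed
  have E3: "measure M {\<omega>\<in>space M. p \<omega> \<in> A \<and> \<not> b \<omega>} = (\<integral>x. f x * indicator A x * (1 - x) \<partial>lborel)"
    if A[measurable]: "A \<in> sets borel" for A
  proof -
    have "{\<omega>\<in>space M. p \<omega> \<in> A \<and> \<not> b \<omega>} = {\<omega>\<in>space M. p \<omega> \<in> A} - {\<omega>\<in>space M. p \<omega> \<in> A \<and> b \<omega>}" by auto
    then have "measure M {\<omega>\<in>space M. p \<omega> \<in> A \<and> \<not> b \<omega>} = measure M {\<omega>\<in>space M. p \<omega> \<in> A} - measure M {\<omega>\<in>space M. p \<omega> \<in> A \<and> b \<omega>}"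
      by (simp add: P.finite_measure_Diff subset_iff)
    also have "\<dots> = (\<integral>x. f x * indicator A x \<partial>lborel) - (\<integral>x. f x * indicator A x * x \<partial>lborel)"
      using E1[OF A] E2[OF A] by simp
    also have "\<dots> = (\<integral>x. f x * indicator A x - f x * indicator A x * x \<partial>lborel)"
      using F.int_f_ind[of "\<lambda>x. 1" 1 A] F.int_f_ind[of "\<lambda>x. x" 1 A] by simp
    also have "\<dots> = (\<integral>x. f x * indicator A x * (1 - x) \<partial>lborel)"
      by (simp add: algebra_simps)
    finally show ?thesis .
  qed

  define Pb where "Pb t = (if t then F.mu else 1 - F.mu)" for t
  have Pb_nn: "0 \<le> Pb t" for t using F.mu_pos F.mu_lt1 by (simp add: Pb_def)
  have Pbd: "distributed M (count_space UNIV) b (\<lambda>t. ennreal (Pb t))"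
  proof (rule distributed_countable[OF assms(1) b_meas _ Pb_nn])
    fix t :: bool
    show "measure M {\<omega>\<in>space M. b \<omega> = t} = Pb t"
    proof (cases t)
      case True
      then show ?thesis using E2[of UNIV] by (simp add: Pb_def F.mu_def)
    next
      case False
      then show ?thesis using E3[of UNIV] by (simp add: Pb_def F.one_minus_mu)
    qed
  qed

  have Ipb1: "P.mutual_information (exp 1) borel (count_space UNIV) p b
      = P.mutual_information (exp 1) lborel (count_space UNIV) p b"
  proof -
    have 1: "distr M borel p = distr M lborel p" by (rule distr_cong) auto
    have 2: "distr M (borel \<Otimes>\<^sub>M count_space UNIV) (\<lambda>x. (p x, b x)) = distr M (lborel \<Otimes>\<^sub>M count_space UNIV) (\<lambda>x. (p x, b x))"
      by (rule distr_cong) (auto intro!: sets_pair_measure_cong)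
    show ?thesis unfolding P.mutual_information_def 1 2 ..
  qed
  have Pxy: "distributed M (lborel \<Otimes>\<^sub>M count_space UNIV) (\<lambda>\<omega>. (p \<omega>, b \<omega>))
           (\<lambda>z. ennreal (f (fst z) * (if snd z then fst z else 1 - fst z)))"
    by (rule F.joint_distr[OF assms(1) pm b_meas E2 E3])
  have Ipb2: "P.mutual_information (exp 1) lborel (count_space UNIV) p b
     = integral\<^sup>L (lborel \<Otimes>\<^sub>M count_space UNIV)
        (\<lambda>z. f (fst z) * (if snd z then fst z else 1 - fst z) *
             log (exp 1) (f (fst z) * (if snd z then fst z else 1 - fst z) / (f (fst z) * Pb (snd z))))"
    by (rule I.mutual_information_distr[OF lborel.sigma_finite_measure_axioms sigma_finite_measure_count_space pf _ Pbd Pb_nn Pxy])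
       (auto simp: fnn F.fx_nn)
  have Ipb3: "\<dots> = integral\<^sup>L (lborel \<Otimes>\<^sub>M count_space UNIV) F.H"
  proof (rule Bochner_Integration.integral_cong[OF refl])
    fix z :: "real \<times> bool"
    obtain x t where z: "z = (x, t)" by (cases z)
    show "f (fst z) * (if snd z then fst z else 1 - fst z) *
             log (exp 1) (f (fst z) * (if snd z then fst z else 1 - fst z) / (f (fst z) * Pb (snd z))) = F.H z"
    proof (cases "f x = 0")
      case True then show ?thesis by (simp add: z F.H_def)
    next
      case False
      then have "0 < f x" using fnn[of x] by simp
      then show ?thesis by (simp add: z F.H_def Pb_def log_e)
    qed
  qed
  have Ipb: "P.mutual_information (exp 1) borel (count_space UNIV) p b = integral\<^sup>L lborel F.Phi"
    using Ipb1 Ipb2 Ipb3 F.H_integral by simp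

  define q where "q \<omega> = \<lceil>p \<omega> * real m\<rceil>" for \<omega>
  have q_eq: "(\<lambda>\<omega>. \<lceil>p \<omega> / (1 / real m)\<rceil>) = q" by (simp add: q_def fun_eq_iff)
  have q_pre: "{\<omega>\<in>space M. q \<omega> = k} = {\<omega>\<in>space M. p \<omega> \<in> binI m k}" for k
    using binI_iff[OF m0] by (auto simp: q_def)
  have qm[measurable]: "q \<in> measurable M (count_space UNIV)"
  proof (subst measurable_count_space_eq_countable, simp, safe)
    fix k :: int
    have "q -` {k} \<inter> space M = {\<omega>\<in>space M. q \<omega> = k}" by auto
    also have "\<dots> = {\<omega>\<in>space M. p \<omega> \<in> binI m k}" by (rule q_pre)
    also have "\<dots> \<in> sets M" by measurable
    finally show "q -` {k} \<inter> space M \<in> sets M" .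
  qed simp
  have Pk_nn: "0 \<le> F.Pk m k" for k unfolding F.Pk_def by (rule Bochner_Integration.integral_nonneg) (simp add: fnn)
  have Pqd: "distributed M (count_space UNIV) q (\<lambda>k. ennreal (F.Pk m k))"
  proof (rule distributed_countable[OF assms(1) qm _ Pk_nn])
    fix k :: int
    show "measure M {\<omega>\<in>space M. q \<omega> = k} = F.Pk m k"
      unfolding q_pre by (simp add: E1 F.Pk_def)
  qed
  define Q where "Q z = (if snd z then F.Sk m (fst z) else F.Tk m (fst z))" for z :: "int \<times> bool"
  have Q_nn: "0 \<le> Q z" for z
    unfolding Q_def F.Sk_def F.Tk_def
    by (auto intro!: Bochner_Integration.integral_nonneg simp: indicator_def F.fx_nn)
  have cc: "count_space UNIV \<Otimes>\<^sub>M count_space UNIV = (count_space UNIV :: (int \<times> bool) measure)"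
    by (simp add: pair_measure_countable)
  have qbm: "(\<lambda>\<omega>. (q \<omega>, b \<omega>)) \<in> measurable M (count_space UNIV)"
  proof -
    have "(\<lambda>\<omega>. (q \<omega>, b \<omega>)) \<in> measurable M (count_space UNIV \<Otimes>\<^sub>M count_space UNIV)" by measurable
    then show ?thesis unfolding cc .
  qed
  have Qd: "distributed M (count_space UNIV \<Otimes>\<^sub>M count_space UNIV) (\<lambda>\<omega>. (q \<omega>, b \<omega>)) (\<lambda>z. ennreal (Q z))"
    unfolding cc
  proof (rule distributed_countable[OF assms(1) qbm _ Q_nn])
    fix z :: "int \<times> bool"
    obtain k t where z: "z = (k, t)" by (cases z)
    show "measure M {\<omega>\<in>space M. (q \<omega>, b \<omega>) = z} = Q z"
    proof (cases t)
      case True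
      have "{\<omega>\<in>space M. (q \<omega>, b \<omega>) = z} = {\<omega>\<in>space M. p \<omega> \<in> binI m k \<and> b \<omega>}"
        using q_pre[of k] True by (auto simp: z)
      then show ?thesis using E2[of "binI m k"] True by (simp add: Q_def z F.Sk_def)
    next
      case False
      have "{\<omega>\<in>space M. (q \<omega>, b \<omega>) = z} = {\<omega>\<in>space M. p \<omega> \<in> binI m k \<and> \<not> b \<omega>}"
        using q_pre[of k] False by (auto simp: z)
      then show ?thesis using E3[of "binI m k"] False by (simp add: Q_def z F.Tk_def)
    qed
  qed
  define J where "J z = Q z * log (exp 1) (Q z / (F.Pk m (fst z) * Pb (snd z)))" for z
  have Iqb1: "P.mutual_information (exp 1) (count_space UNIV) (count_space UNIV) q b
      = integral\<^sup>L (count_space UNIV \<Otimes>\<^sub>M count_space UNIV) J"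
    unfolding J_def
    by (rule I.mutual_information_distr[OF sigma_finite_measure_count_space sigma_finite_measure_count_space Pqd _ Pbd Pb_nn Qd])
       (auto simp: Pk_nn Q_nn)
  have Jz: "J z = 0" if "z \<notin> {1..int m} \<times> UNIV" for z
  proof -
    obtain k t where z: "z = (k, t)" by (cases z)
    then have "k \<notin> {1..int m}" using that by auto
    then show ?thesis using F.Sk_Tk_out[OF m0] by (simp add: J_def Q_def z)
  qed
  have "integral\<^sup>L (count_space UNIV \<Otimes>\<^sub>M count_space UNIV) J = integral\<^sup>L (count_space UNIV) J"
    unfolding cc ..
  also have "\<dots> = (\<Sum>z | z \<in> UNIV \<and> J z \<noteq> 0. J z)"
  proof (rule lebesgue_integral_count_space_finite_support)
    show "finite {z \<in> UNIV. J z \<noteq> 0}"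
      by (rule finite_subset[where B="{1..int m} \<times> UNIV"]) (use Jz in auto)
  qed
  also have "\<dots> = (\<Sum>z\<in>{1..int m} \<times> UNIV. J z)"
    by (rule sum.mono_neutral_left) (use Jz in auto)
  also have "\<dots> = (\<Sum>k\<in>{1..int m}. \<Sum>t\<in>UNIV. J (k, t))"
    by (simp add: sum.cartesian_product)
  also have "\<dots> = (\<Sum>k\<in>{1..int m}. F.Sk m k * ln (F.Sk m k / (F.Pk m k * F.mu)) + F.Tk m k * ln (F.Tk m k / (F.Pk m k * (1 - F.mu))))"
  proof (rule sum.cong[OF refl])
    fix k
    have "(\<Sum>t\<in>UNIV. J (k, t)) = J (k, True) + J (k, False)"
      unfolding UNIV_bool by (simp only: sum.insert finite.emptyI finite_insert insert_iff empty_iff sum.empty simp_thms)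
    then show "(\<Sum>t\<in>UNIV. J (k, t)) = F.Sk m k * ln (F.Sk m k / (F.Pk m k * F.mu)) + F.Tk m k * ln (F.Tk m k / (F.Pk m k * (1 - F.mu)))"
      by (simp add: J_def Q_def Pb_def log_e add.commute)
  qed
  finally have Iqb: "P.mutual_information (exp 1) (count_space UNIV) (count_space UNIV) q b
      = (\<Sum>k\<in>{1..int m}. F.Sk m k * ln (F.Sk m k / (F.Pk m k * F.mu)) + F.Tk m k * ln (F.Tk m k / (F.Pk m k * (1 - F.mu))))"
    using Iqb1 by simp
  note A = F.analytic[OF m0]
  have "2 / real m \<le> max 3 (ln (1 / (1 / real m))) * (1 / real m)"
  proof -
    have "2 / real m \<le> 3 * (1 / real m)" using m0 by (simp add: divide_right_mono)
    also have "\<dots> \<le> max 3 (ln (1 / (1 / real m))) * (1 / real m)"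
      by (intro mult_right_mono) auto
    finally show ?thesis .
  qed
  then show ?thesis
    unfolding Let_def q_eq Ipb Iqb using A by linarith
qed

end
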